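(* Let $H\in\mathbb{N}$, $K_p\in\mathbb{R}^{m_p\times n_p}$, $L_p\in\mathbb{R}^{n_p\times q_p}$, $\Psi_p\subseteq\mathbb{R}^{n_p}$, and let $\Omega_p\subseteq\mathbb{R}^{n_p}$ be a set containing the origin such that for all $i\in\{1,\dots,H\}$ $$(A_p^i+B_p^iK_p)\Omega_p\oplus\Big(\bigoplus_{j=0}^{i-1}A_p^jL_p(C_p\Psi_p\oplus\mathbb{V}_p)\Big)\subseteq\Omega_p,$$ where $B_p^i:=\sum_{j=0}^{i-1}A_p^jB_p$. Then with $\mu(\bar\nu_c,\hat x_p,\bar x_p):=\bar\nu_c+K_p(\hat x_p-\bar x_p)$ and $\eta(\hat x_p,\tilde x_p,\bar x_p):=0$ ("ZOH actuator"), the set $\Omega:=\Omega_p\times K_p\Omega_p\times\{0\}$ is $[1,H]$ RCI for the control error $e$.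
   Context: Setting. $A_p\in\mathbb{R}^{n_p\times n_p}$, $B_p\in\mathbb{R}^{n_p\times m_p}$, $C_p\in\mathbb{R}^{q_p\times n_p}$; $\mathbb{X}_p,\mathbb{U}_p$ closed sets containing the origin; $\mathbb{V}_p\subseteq\mathbb{R}^{q_p}$ compact convex containing the origin; integers $g\ge1$, $c\ge g$, $b\ge c$. Overall state $x=(x_p,u_s,\beta)\in\mathbb{R}^{n_p}\times\mathbb{R}^{m_p}\times\mathbb{R}$, input $u=(u_c,\gamma,u_e)\in\mathbb{R}^{m_p}\times\{0,1\}\times\mathbb{R}^{m_p}$, $$f(x,u):=\begin{bmatrix}A_px_p+B_p((1-\gamma)u_s+\gamma u_c+u_e)\\ (1-\gamma)u_s+\gamma u_c\\ \min\{\beta+g-\gamma c,\,b\}\end{bmatrix},$$ $\mathbb{X}:=\mathbb{X}_p\times\mathbb{U}_p\times\{0,\dots,b\}$, and $\Delta:=L_p(C_p\Psi_p\oplus\mathbb{V}_p)\times\{0\}\times\{0\}$. $[1,H]$ RCI sets. Given functions $\mu:\mathbb{R}^{m_p}\times\mathbb{R}^{n_p}\times\mathbb{R}^{n_p}\to\mathbb{R}^{m_p}$ and $\eta:\mathbb{R}^{n_p}\times\mathbb{R}^{n_p}\times\mathbb{R}^{n_p}\to\mathbb{R}^{m_p}$, define for $\bar\nu=(\bar\nu_c,\bar\gamma,\cdot)$ $\phi'(\bar\nu,\hat x,\tilde x,\bar x):=(\mu(\bar\nu_c,\hat x_p,\bar x_p),\,1,\,\eta(\hat x_p,\tilde x_p,\bar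 x_p))$ and $\phi''(\bar\nu,\hat x,\tilde x,\bar x):=(0,\,0,\,\eta(\hat x_p,\tilde x_p,\bar x_p))$. Given initial states $\hat x(0),\tilde x(0),\bar x(0)$, $\bar\nu_c(0)\in\mathbb{U}_p$ and $\delta(0),\dots,\delta(H-1)\in\Delta$, let $\bar\nu(0):=(\bar\nu_c(0),1,0)$, $\bar\nu(i):=(0,0,0)$ for $i\ge1$, and define for $i=0,\dots,H-1$: $\bar x(i+1)=f(\bar x(i),\bar\nu(i))$, $\tilde x(i+1)=f(\tilde x(i),u(i))$, $\hat x(i+1)=f(\hat x(i),u(i))+\delta(i)$, where $u(0)=\phi'(\bar\nu(0),\hat x(0),\tilde x(0),\bar x(0))$ and $u(i)=\phi''(\bar\nu(i),\hat x(i),\tilde x(i),\bar x(i))$ for $i\ge1$. The control error is $e(i):=\hat x(i)-\bar x(i)$. A set $\Omega\subseteq\mathbb{R}^{n_p+m_p+1}$ is called $[1,H]$ RCI for the control error $e$ (with these $\mu,\eta$) if for all $\hat x(0),\tilde x(0),\bar x(0)\in\mathbb{X}$ with $\tilde x(0)=\hat x(0)$ and $e(0)\in\Omega$, all $\bar\nu_c(0)\in\mathbb{U}_p$ and all $(\delta(i))_{i=0}^{H-1}\in\Delta^H$, it holds $e(i)\in\Omega$ for all $i\in\{1,\dots,H\}$. *)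

theory Defs
  imports "HOL-Analysis.Analysis"
begin

primrec mpow :: "real^'n^'n \<Rightarrow> nat \<Rightarrow> real^'n^'n" where
  "mpow A 0 = mat 1"
| "mpow A (Suc i) = A ** mpow A i"

definition msum :: "'a::monoid_add set \<Rightarrow> 'a set \<Rightarrow> 'a set" where
  "msum X Y = {x + y | x y. x \<in> X \<and> y \<in> Y}"

primrec bigmsum :: "(nat \<Rightarrow> 'a::monoid_add set) \<Rightarrow> nat \<Rightarrow> 'a set" where
  "bigmsum S 0 = {0}"
| "bigmsum S (Suc i) = msum (bigmsum S i) (S i)"

definition Bpow :: "real^'n^'n \<Rightarrow> real^'m^'n \<Rightarrow> nat \<Rightarrow> real^'m^'n" where
  "Bpow A B i = (\<Sum>j<i. mpow A j ** B)"

text \<open>Overall state x = (x_p, u_s, beta), input u = (u_c, gamma, u_e).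
  gamma \<in> {0,1} is represented as a real number; only the values 0 and 1 are used.\<close>
type_synonym ('n,'m) st = "(real^'n) \<times> (real^'m) \<times> real"
type_synonym 'm inp = "(real^'m) \<times> real \<times> (real^'m)"

definition fdyn :: "real^'n^'n \<Rightarrow> real^'m^'n \<Rightarrow> nat \<Rightarrow> nat \<Rightarrow> nat
    \<Rightarrow> ('n,'m) st \<Rightarrow> 'm inp \<Rightarrow> ('n,'m) st" where
  "fdyn A B g c b x u = (case x of (xp, us, \<beta>) \<Rightarrow> case u of (uc, \<gamma>, ue) \<Rightarrow>
     (A *v xp + B *v ((1 - \<gamma>) *\<^sub>R us + \<gamma> *\<^sub>R uc + ue),
      (1 - \<gamma>) *\<^sub>R us + \<gamma> *\<^sub>R uc,
      min (\<beta> + real g - \<gamma> * real c) (real b)))"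

definition Xset :: "(real^'n) set \<Rightarrow> (real^'m) set \<Rightarrow> nat \<Rightarrow> ('n,'m) st set" where
  "Xset Xp Up b = Xp \<times> Up \<times> (real ` {0..b})"

definition Dset :: "real^'q^'n \<Rightarrow> real^'n^'q \<Rightarrow> (real^'n) set \<Rightarrow> (real^'q) set
    \<Rightarrow> ('n,'m::finite) st set" where
  "Dset L C Psi V = ((\<lambda>y. L *v y) ` msum ((\<lambda>x. C *v x) ` Psi) V) \<times> {0} \<times> {0}"

definition nubar :: "real^'m \<Rightarrow> nat \<Rightarrow> 'm inp" where
  "nubar nuc0 i = (if i = 0 then (nuc0, 1, 0) else (0, 0, 0))"

definition uctrl :: "(real^'m \<Rightarrow> real^'n \<Rightarrow> real^'n \<Rightarrow> real^'m)
    \<Rightarrow> (real^'n \<Rightarrow> real^'n \<Rightarrow> real^'n \<Rightarrow> real^'m)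
    \<Rightarrow> real^'m \<Rightarrow> nat \<Rightarrow> ('n,'m) st \<Rightarrow> ('n,'m) st \<Rightarrow> ('n,'m) st \<Rightarrow> 'm inp" where
  "uctrl mu eta nuc0 i xh xt xb =
     (if i = 0 then (mu (fst (nubar nuc0 i)) (fst xh) (fst xb), 1, eta (fst xh) (fst xt) (fst xb))
      else (0, 0, eta (fst xh) (fst xt) (fst xb)))"

primrec traj :: "real^'n^'n \<Rightarrow> real^'m^'n \<Rightarrow> nat \<Rightarrow> nat \<Rightarrow> nat
    \<Rightarrow> (real^'m \<Rightarrow> real^'n \<Rightarrow> real^'n \<Rightarrow> real^'m)
    \<Rightarrow> (real^'n \<Rightarrow> real^'n \<Rightarrow> real^'n \<Rightarrow> real^'m)
    \<Rightarrow> ('n,'m) st \<Rightarrow> ('n,'m) st \<Rightarrow> ('n,'m) st \<Rightarrow> real^'m \<Rightarrow> (nat \<Rightarrow> ('n,'m) st)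
    \<Rightarrow> nat \<Rightarrow> ('n,'m) st \<times> ('n,'m) st \<times> ('n,'m) st" where
  "traj A B g c b mu eta xh0 xt0 xb0 nuc0 \<delta> 0 = (xh0, xt0, xb0)"
| "traj A B g c b mu eta xh0 xt0 xb0 nuc0 \<delta> (Suc i) =
     (case traj A B g c b mu eta xh0 xt0 xb0 nuc0 \<delta> i of (xh, xt, xb) \<Rightarrow>
       (let u = uctrl mu eta nuc0 i xh xt xb in
         (fdyn A B g c b xh u + \<delta> i, fdyn A B g c b xt u, fdyn A B g c b xb (nubar nuc0 i))))"

definition cerr where
  "cerr A B g c b mu eta xh0 xt0 xb0 nuc0 \<delta> i =
     (case traj A B g c b mu eta xh0 xt0 xb0 nuc0 \<delta> i of (xh, xt, xb) \<Rightarrow> xh - xb)"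

definition RCI_1H :: "nat \<Rightarrow> ('n,'m) st set
    \<Rightarrow> real^'n^'n \<Rightarrow> real^'m^'n \<Rightarrow> real^'n^'q \<Rightarrow> real^'q^'n
    \<Rightarrow> (real^'n) set \<Rightarrow> (real^'m) set \<Rightarrow> (real^'q) set \<Rightarrow> (real^'n) set
    \<Rightarrow> nat \<Rightarrow> nat \<Rightarrow> nat
    \<Rightarrow> (real^'m \<Rightarrow> real^'n \<Rightarrow> real^'n \<Rightarrow> real^'m)
    \<Rightarrow> (real^'n \<Rightarrow> real^'n \<Rightarrow> real^'n \<Rightarrow> real^'m) \<Rightarrow> bool" where
  "RCI_1H H \<Omega> A B C L Xp Up V Psi g c b mu eta \<longleftrightarrow>
     (\<forall>xh0 xt0 xb0 nuc0 \<delta>.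
        xh0 \<in> Xset Xp Up b \<and> xt0 \<in> Xset Xp Up b \<and> xb0 \<in> Xset Xp Up b \<and> xt0 = xh0 \<and>
        xh0 - xb0 \<in> \<Omega> \<and> nuc0 \<in> Up \<and> (\<forall>i<H. \<delta> i \<in> Dset L C Psi V) \<longrightarrow>
        (\<forall>i\<in>{1..H}. cerr A B g c b mu eta xh0 xt0 xb0 nuc0 \<delta> i \<in> \<Omega>))"

end

theory Submission
  imports Defs
begin

lemma bigmsum_mem:
  "(\<And>k. k < i \<Longrightarrow> s k \<in> S k) \<Longrightarrow> (\<Sum>k<i. s k) \<in> bigmsum S i"
proof (induction i)
  case 0 then show ?case by simp
next
  case (Suc i)
  then show ?case by (auto simp: msum_def)
qed

lemma Bpow_mulv: "Bpow A B i *v v = (\<Sum>j<i. mpow A j *v (B *v v))"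
  unfolding Bpow_def
  by (induction i) (auto simp: matrix_vector_mult_add_rdistrib matrix_vector_mul_assoc)

lemma BV_Suc: "(\<Sum>j<Suc i. mpow A j *v w) = w + A *v (\<Sum>j<i. mpow A j *v w)"
  unfolding sum.lessThan_Suc_shift by (simp del: sum.lessThan_Suc add: vec.sum matrix_vector_mul_assoc)

lemma D_Suc: "(\<Sum>k<Suc i. mpow A k *v d (Suc i - 1 - k)) = d i + A *v (\<Sum>k<i. mpow A k *v d (i - 1 - k))"
  unfolding sum.lessThan_Suc_shift by (simp del: sum.lessThan_Suc add: vec.sum matrix_vector_mul_assoc)

lemma cerr_Suc:
  "cerr A B g c b mu eta xh0 xt0 xb0 nuc0 \<delta> (Suc i) =
   (case traj A B g c b mu eta xh0 xt0 xb0 nuc0 \<delta> i of (xh, xt, xb) \<Rightarrow>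
      fdyn A B g c b xh (uctrl mu eta nuc0 i xh xt xb) + \<delta> i - fdyn A B g c b xb (nubar nuc0 i))"
  unfolding cerr_def by (simp split: prod.split add: Let_def)

lemma cerr_traj:
  "traj A B g c b mu eta xh0 xt0 xb0 nuc0 \<delta> i = (xh, xt, xb) \<Longrightarrow>
   cerr A B g c b mu eta xh0 xt0 xb0 nuc0 \<delta> i = xh - xb"
  unfolding cerr_def by simp

lemma closed_form:
  fixes A :: "real^'n^'n" and B :: "real^'m^'n" and K :: "real^'n^'m"
  assumes e0: "xh0 - xb0 = (ep, eu, 0)"
    and dl: "\<And>j. j < H \<Longrightarrow> \<delta> j = (d j, 0, 0)"
  shows "1 \<le> i \<Longrightarrow> i \<le> H \<Longrightarrow>
    cerr A B g c b (\<lambda>nuc xh xb. nuc + K *v (xh - xb)) (\<lambda>xh xt xb. 0) xh0 xt0 xb0 nuc0 \<delta> i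
     = (mpow A i *v ep + (\<Sum>j<i. mpow A j *v (B *v (K *v ep))) + (\<Sum>k<i. mpow A k *v d (i - 1 - k)), K *v ep, 0)"
proof (induction i)
  case 0 then show ?case by simp
next
  case (Suc i)
  show ?case
  proof (cases "i = 0")
    case True
    obtain ph uh bh where h: "xh0 = (ph, uh, bh)" by (cases xh0) auto
    obtain pb ub bb where bx: "xb0 = (pb, ub, bb)" by (cases xb0) auto
    have d0: "\<delta> 0 = (d 0, 0, 0)" using dl Suc.prems True by simp
    from e0 h bx have "ph - pb = ep" "bh = bb" by auto
    then show ?thesis using True h bx d0
      by (simp add: cerr_Suc fdyn_def uctrl_def nubar_def matrix_vector_right_distrib
          matrix_vector_mul_lid algebra_simps)
  next
    case False
    obtain xh xt xb where tr: "traj A B g c b (\<lambda>nuc xh xb. nuc + K *v (xh - xb)) (\<lambda>xh xt xb. 0) xh0 xt0 xb0 nuc0 \<delta> i = (xh, xt, xb)"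
      by (metis prod_cases3)
    have IH: "xh - xb = (mpow A i *v ep + (\<Sum>j<i. mpow A j *v (B *v (K *v ep))) + (\<Sum>k<i. mpow A k *v d (i - 1 - k)), K *v ep, 0)"
      using Suc.IH Suc.prems False cerr_traj[OF tr] by simp
    obtain ph uh bh where h: "xh = (ph, uh, bh)" by (cases xh) auto
    obtain pb ub bb where bx: "xb = (pb, ub, bb)" by (cases xb) auto
    have di: "\<delta> i = (d i, 0, 0)" using dl Suc.prems by simp
    from IH h bx have 1: "ph - pb = mpow A i *v ep + (\<Sum>j<i. mpow A j *v (B *v (K *v ep))) + (\<Sum>k<i. mpow A k *v d (i - 1 - k))"
      and 2: "uh - ub = K *v ep" and 3: "bh = bb" by auto
    have "cerr A B g c b (\<lambda>nuc xh xb. nuc + K *v (xh - xb)) (\<lambda>xh xt xb. 0) xh0 xt0 xb0 nuc0 \<delta> (Suc i)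
       = (A *v (ph - pb) + B *v (uh - ub) + d i, uh - ub, 0)"
      using tr h bx di False 3
      by (simp add: cerr_Suc fdyn_def uctrl_def nubar_def matrix_vector_right_distrib algebra_simps)
    also have "\<dots> = (mpow A (Suc i) *v ep + (\<Sum>j<Suc i. mpow A j *v (B *v (K *v ep))) + (\<Sum>k<Suc i. mpow A k *v d (Suc i - 1 - k)), K *v ep, 0)"
      unfolding 1 2 BV_Suc D_Suc
      by (simp add: matrix_vector_right_distrib matrix_vector_mul_assoc algebra_simps)
    finally show ?thesis .
  qed
qed


theorem lemma2:
  fixes A :: "real^'n^'n" and B :: "real^'m^'n" and C :: "real^'n^'q"
    and K :: "real^'n^'m" and L :: "real^'q^'n"
    and Xp :: "(real^'n) set" and Up :: "(real^'m) set" and V :: "(real^'q) set"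
    and Psi :: "(real^'n) set" and Omp :: "(real^'n) set"
    and g c b H :: nat
  assumes "closed Xp" and "0 \<in> Xp" and "closed Up" and "0 \<in> Up"
    and "compact V" and "convex V" and "0 \<in> V"
    and "g \<ge> 1" and "c \<ge> g" and "b \<ge> c"
    and "0 \<in> Omp"
    and "\<forall>i\<in>{1..H}.
           msum ((\<lambda>x. (mpow A i + Bpow A B i ** K) *v x) ` Omp)
                (bigmsum (\<lambda>j. (\<lambda>y. (mpow A j ** L) *v y) ` msum ((\<lambda>x. C *v x) ` Psi) V) i)
           \<subseteq> Omp"
  shows "RCI_1H H (Omp \<times> ((\<lambda>x. K *v x) ` Omp) \<times> {0}) A B C L Xp Up V Psi g c b
           (\<lambda>nuc xh xb. nuc + K *v (xh - xb)) (\<lambda>xh xt xb. 0)"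
  unfolding RCI_1H_def
proof (intro allI impI ballI)
  fix xh0 xt0 xb0 :: "(real^'n) \<times> (real^'m) \<times> real" and nuc0 :: "real^'m" and \<delta> :: "nat \<Rightarrow> (real^'n) \<times> (real^'m) \<times> real" and i :: nat
  assume H: "xh0 \<in> Xset Xp Up b \<and> xt0 \<in> Xset Xp Up b \<and> xb0 \<in> Xset Xp Up b \<and> xt0 = xh0 \<and>
        xh0 - xb0 \<in> Omp \<times> (\<lambda>x. K *v x) ` Omp \<times> {0} \<and> nuc0 \<in> Up \<and> (\<forall>i<H. \<delta> i \<in> Dset L C Psi V)"
    and i: "i \<in> {1..H}"
  let ?S = "msum ((\<lambda>x. C *v x) ` Psi) V"
  obtain ep eu where e0: "xh0 - xb0 = (ep, eu, 0)" and ep: "ep \<in> Omp"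
    using H by (cases "xh0 - xb0") auto
  have "\<forall>j<H. \<exists>y. y \<in> ?S \<and> \<delta> j = (L *v y, 0, 0)"
    using H unfolding Dset_def by force
  then obtain y where y: "\<And>j. j < H \<Longrightarrow> y j \<in> ?S \<and> \<delta> j = (L *v y j, 0, 0)"
    by metis
  have cf: "cerr A B g c b (\<lambda>nuc xh xb. nuc + K *v (xh - xb)) (\<lambda>xh xt xb. 0) xh0 xt0 xb0 nuc0 \<delta> i
     = (mpow A i *v ep + (\<Sum>j<i. mpow A j *v (B *v (K *v ep))) + (\<Sum>k<i. mpow A k *v (L *v y (i - 1 - k))), K *v ep, 0)"
    using closed_form[OF e0, of H \<delta> "\<lambda>j. L *v y j"] y i by auto
  have a: "mpow A i *v ep + (\<Sum>j<i. mpow A j *v (B *v (K *v ep))) = (mpow A i + Bpow A B i ** K) *v ep"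
    by (simp add: matrix_vector_mult_add_rdistrib Bpow_mulv matrix_vector_mul_assoc[symmetric])
  have b: "(\<Sum>k<i. mpow A k *v (L *v y (i - 1 - k))) \<in> bigmsum (\<lambda>j. (\<lambda>y. (mpow A j ** L) *v y) ` ?S) i"
    apply (rule bigmsum_mem)
    using y i by (auto simp: matrix_vector_mul_assoc)
  have "mpow A i *v ep + (\<Sum>j<i. mpow A j *v (B *v (K *v ep))) + (\<Sum>k<i. mpow A k *v (L *v y (i - 1 - k))) \<in> Omp"
    using assms(12) i ep b unfolding a msum_def by blast
  then show "cerr A B g c b (\<lambda>nuc xh xb. nuc + K *v (xh - xb)) (\<lambda>xh xt xb. 0) xh0 xt0 xb0 nuc0 \<delta> i
       \<in> Omp \<times> (\<lambda>x. K *v x) ` Omp \<times> {0}"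
    unfolding cf using ep by auto
qed

end
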